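(* Let $G=(V,E)$ be a graph, $S\subseteq V$, and let $M_a,M_b$ be matchings of $G$ such that $M_b$ hits at least $s\le|S|$ nodes of $S$. Then for every integer $k\ge1$ there is a matching $M_c$ of $G$, computable by a deterministic LOCAL algorithm in $O(k)$ rounds, such that: (i) $|M_c|\ge|M_a|$; (ii) $|V(M_a)\setminus(V(M_c)\cup S)|\le|(S\cap V(M_c))\setminus V(M_a)|$; (iii) $M_c$ hits at least $(1-1/k)s$ nodes of $S$.
   Context: For a matching $M$, $V(M)$ denotes the set of nodes that are endpoints of edges of $M$; $M$ hits $v$ iff $v\in V(M)$. LOCAL model: synchronous rounds, unique identifiers, unbounded messages; each node knows its incident edges in $M_a$ and $M_b$ and whether it lies in $S$. *)

theory Defs
  imports Complex_Main
begin

text \<open>A graph is a pair (V, E): a finite vertex set V and a set E of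
  2-element subsets of V (simple undirected graph). Vertex names serve as
  the unique identifiers of the LOCAL model.\<close>

definition graph :: "'v set \<Rightarrow> 'v set set \<Rightarrow> bool" where
  "graph V E \<longleftrightarrow> finite V \<and> (\<forall>e\<in>E. \<exists>u v. u \<noteq> v \<and> u \<in> V \<and> v \<in> V \<and> e = {u, v})"

definition matching :: "'v set set \<Rightarrow> 'v set set \<Rightarrow> bool" where
  "matching E M \<longleftrightarrow> M \<subseteq> E \<and> (\<forall>e1\<in>M. \<forall>e2\<in>M. e1 \<noteq> e2 \<longrightarrow> e1 \<inter> e2 = {})"

definition Vm :: "'v set set \<Rightarrow> 'v set" where
  "Vm M = \<Union> M"

fun ball :: "'v set set \<Rightarrow> 'v \<Rightarrow> nat \<Rightarrow> 'v set" where
  "ball E v 0 = {v}"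
| "ball E v (Suc r) = ball E v r \<union> {u. \<exists>w\<in>ball E v r. {w, u} \<in> E}"

type_synonym 'v inst = "'v set \<times> 'v set set \<times> 'v set \<times> 'v set set \<times> 'v set set"

definition valid_inst :: "'v inst \<Rightarrow> bool" where
  "valid_inst I = (case I of (V, E, S, Ma, Mb) \<Rightarrow>
     graph V E \<and> S \<subseteq> V \<and> matching E Ma \<and> matching E Mb)"

definition same_view :: "nat \<Rightarrow> 'v \<Rightarrow> 'v inst \<Rightarrow> 'v inst \<Rightarrow> bool" where
  "same_view r v I I' = (case I of (V, E, S, Ma, Mb) \<Rightarrow> case I' of (V', E', S', Ma', Mb') \<Rightarrow>
     (let B = ball E v r in
       B = ball E' v r \<and> V \<inter> B = V' \<inter> B \<and> S \<inter> B = S' \<inter> B \<and>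
       (\<forall>e. e \<subseteq> B \<longrightarrow> (e \<in> E \<longleftrightarrow> e \<in> E') \<and> (e \<in> Ma \<longleftrightarrow> e \<in> Ma') \<and> (e \<in> Mb \<longleftrightarrow> e \<in> Mb'))))"

text \<open>A deterministic LOCAL algorithm running in r rounds: the output of
  every node (the set of its incident output edges) is a function of its
  radius-r view (standard characterisation of the LOCAL model with unique
  identifiers and unbounded messages).\<close>
definition local_alg :: "nat \<Rightarrow> ('v inst \<Rightarrow> 'v set set) \<Rightarrow> bool" where
  "local_alg r A \<longleftrightarrow> (\<forall>I I' v. valid_inst I \<and> valid_inst I' \<and> same_view r v I I' \<longrightarrow>
       {e \<in> A I. v \<in> e} = {e \<in> A I'. v \<in> e})"

end

theory Submission
  imports Defs
begin

definition mate :: "'v set set \<Rightarrow> 'v \<Rightarrow> 'v option" where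
  "mate M x = (if \<exists>u. {x,u} \<in> M then Some (SOME u. {x,u} \<in> M) else None)"

fun wk :: "'v set set \<Rightarrow> 'v set set \<Rightarrow> 'v \<Rightarrow> nat \<Rightarrow> 'v option" where
  "wk Ma Mb y 0 = Some y"
| "wk Ma Mb y (Suc n) = (case wk Ma Mb y n of None \<Rightarrow> None
      | Some a \<Rightarrow> mate (if even n then Mb else Ma) a)"

definition cutP :: "'v set \<Rightarrow> 'v set set \<Rightarrow> 'v set set \<Rightarrow> nat \<Rightarrow> 'v \<Rightarrow> nat \<Rightarrow> bool" where
  "cutP S Ma Mb k y i = (1 \<le> i \<and> i \<le> k \<and> (i = k \<or> wk Ma Mb y (2*i) \<notin> Some ` S))"

definition cut :: "'v set \<Rightarrow> 'v set set \<Rightarrow> 'v set set \<Rightarrow> nat \<Rightarrow> 'v \<Rightarrow> nat" where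
  "cut S Ma Mb k y = (LEAST i. cutP S Ma Mb k y i)"

definition Uset :: "'v set \<Rightarrow> 'v set set \<Rightarrow> 'v set set \<Rightarrow> nat \<Rightarrow> 'v set set" where
  "Uset S Ma Mb k = {e. \<exists>y j a b. y \<in> S \<and> y \<notin> Vm Ma \<and> j < 2 * cut S Ma Mb k y
       \<and> wk Ma Mb y j = Some a \<and> wk Ma Mb y (Suc j) = Some b \<and> e = {a,b}}"

definition MC :: "'v set \<Rightarrow> 'v set set \<Rightarrow> 'v set set \<Rightarrow> nat \<Rightarrow> 'v set set" where
  "MC S Ma Mb k = (Ma - Uset S Ma Mb k) \<union> (Mb \<inter> Uset S Ma Mb k)"

lemma graph_edge: "graph V E \<Longrightarrow> e \<in> E \<Longrightarrow> \<exists>a b. a \<noteq> b \<and> a \<in> V \<and> b \<in> V \<and> e = {a,b}"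
  unfolding graph_def by blast

lemma graph_inc: "graph V E \<Longrightarrow> e \<in> E \<Longrightarrow> x \<in> e \<Longrightarrow> \<exists>u. e = {x,u}"
  by (drule (1) graph_edge) auto

lemma match_uniq_edge: "matching E M \<Longrightarrow> e \<in> M \<Longrightarrow> f \<in> M \<Longrightarrow> x \<in> e \<Longrightarrow> x \<in> f \<Longrightarrow> e = f"
  unfolding matching_def by blast

lemma match_uniq: "matching E M \<Longrightarrow> {x,u} \<in> M \<Longrightarrow> {x,u'} \<in> M \<Longrightarrow> u = u'"
proof -
  assume m: "matching E M" and h: "{x,u} \<in> M" "{x,u'} \<in> M"
  then have "{x,u} = {x,u'}" using match_uniq_edge[OF m h] by auto
  then show "u = u'" by (auto simp: doubleton_eq_iff)
qed

lemma mate_Some: "matching E M \<Longrightarrow> mate M x = Some u \<longleftrightarrow> {x,u} \<in> M"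
proof
  assume m: "matching E M" and "mate M x = Some u"
  then have ex: "\<exists>u. {x,u} \<in> M" and "u = (SOME u. {x,u} \<in> M)"
    unfolding mate_def by (auto split: if_splits)
  then show "{x,u} \<in> M" using someI_ex[OF ex] by simp
next
  assume m: "matching E M" and h: "{x,u} \<in> M"
  then have ex: "\<exists>u. {x,u} \<in> M" by blast
  have "{x, SOME u. {x,u} \<in> M} \<in> M" using someI_ex[OF ex] .
  then have "(SOME u. {x,u} \<in> M) = u" using match_uniq[OF m _ h] by blast
  then show "mate M x = Some u" using ex unfolding mate_def by simp
qed

lemma mate_None: "mate M x = None \<longleftrightarrow> \<not>(\<exists>u. {x,u} \<in> M)"
  unfolding mate_def by auto

lemma mate_cong: "(\<And>u. {x,u} \<in> M \<longleftrightarrow> {x,u} \<in> M') \<Longrightarrow> mate M x = mate M' x"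
  unfolding mate_def by simp

lemma Vm_iff: "graph V E \<Longrightarrow> M \<subseteq> E \<Longrightarrow> x \<in> Vm M \<longleftrightarrow> (\<exists>u. {x,u} \<in> M)"
  unfolding Vm_def
proof
  assume g: "graph V E" "M \<subseteq> E" and "x \<in> \<Union>M"
  then obtain e where e: "e \<in> M" "x \<in> e" by blast
  then obtain u where "e = {x,u}" using graph_inc[OF g(1)] g(2) by blast
  then show "\<exists>u. {x,u} \<in> M" using e by blast
next
  assume "\<exists>u. {x,u} \<in> M"
  then show "x \<in> \<Union>M" by blast
qed


lemma wk_Suc_Some: "wk Ma Mb y (Suc n) = Some b \<Longrightarrow>
   \<exists>a. wk Ma Mb y n = Some a \<and> mate (if even n then Mb else Ma) a = Some b"
  by (auto split: option.splits)

lemma wk_prefix: "wk Ma Mb y n = Some x \<Longrightarrow> m \<le> n \<Longrightarrow> \<exists>z. wk Ma Mb y m = Some z"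
proof (induction n arbitrary: x)
  case 0 then show ?case by simp
next
  case (Suc n)
  show ?case
  proof (cases "m = Suc n")
    case True then show ?thesis using Suc.prems by simp
  next
    case False
    then have "m \<le> n" using Suc.prems by simp
    moreover obtain a where "wk Ma Mb y n = Some a" using wk_Suc_Some[OF Suc.prems(1)] by blast
    ultimately show ?thesis using Suc.IH by blast
  qed
qed

lemma ball_mono: "ball E v m \<subseteq> ball E v (m + d)"
  by (induction d) auto

lemma ball_mono': "m \<le> n \<Longrightarrow> ball E v m \<subseteq> ball E v n"
  using ball_mono[of E v m "n - m"] by simp

lemma ball_step: "x \<in> ball E v m \<Longrightarrow> {x,u} \<in> E \<Longrightarrow> u \<in> ball E v (Suc m)"
  by auto

lemma ball_eq:
  assumes b: "ball E v r = ball E' v r"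
    and ed: "\<And>e. e \<subseteq> ball E v r \<Longrightarrow> (e \<in> E \<longleftrightarrow> e \<in> E')"
  shows "m \<le> r \<Longrightarrow> ball E v m = ball E' v m"
proof (induction m)
  case 0 then show ?case by simp
next
  case (Suc m)
  have IH: "ball E v m = ball E' v m" using Suc.IH Suc.prems by simp
  have s1: "ball E v (Suc m) \<subseteq> ball E v r" "ball E' v (Suc m) \<subseteq> ball E' v r"
    by (rule ball_mono'[OF Suc.prems])+
  have A: "\<And>u w. w \<in> ball E v m \<Longrightarrow> {w,u} \<in> E \<Longrightarrow> {w,u} \<in> E'"
  proof -
    fix u w assume w: "w \<in> ball E v m" and e: "{w,u} \<in> E"
    have "u \<in> ball E v (Suc m)" by (rule ball_step[OF w e])
    moreover have "w \<in> ball E v (Suc m)" using w by simp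
    ultimately have "{w,u} \<subseteq> ball E v r" using s1(1) by blast
    then show "{w,u} \<in> E'" using ed e by blast
  qed
  have B: "\<And>u w. w \<in> ball E' v m \<Longrightarrow> {w,u} \<in> E' \<Longrightarrow> {w,u} \<in> E"
  proof -
    fix u w assume w: "w \<in> ball E' v m" and e: "{w,u} \<in> E'"
    have "u \<in> ball E' v (Suc m)" by (rule ball_step[OF w e])
    moreover have "w \<in> ball E' v (Suc m)" using w by simp
    ultimately have "{w,u} \<subseteq> ball E v r" using s1(2) b by blast
    then show "{w,u} \<in> E" using ed e by blast
  qed
  have C: "{u. \<exists>w\<in>ball E v m. {w,u} \<in> E} = {u. \<exists>w\<in>ball E' v m. {w,u} \<in> E'}"
    using A B IH by blast
  show ?case unfolding ball.simps using C IH by simp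
qed

locale inst =
  fixes V :: "'v set" and E S Ma Mb and k :: nat
  assumes G: "graph V E" and SV: "S \<subseteq> V" and mA: "matching E Ma" and mB: "matching E Mb"
    and k1: "1 \<le> k"
begin

abbreviation "w \<equiv> wk Ma Mb"
abbreviation "c \<equiv> cut S Ma Mb k"
abbreviation "U \<equiv> Uset S Ma Mb k"
abbreviation "Mc \<equiv> MC S Ma Mb k"

lemma MaE: "Ma \<subseteq> E" "Mb \<subseteq> E" using mA mB unfolding matching_def by auto

lemma wk_edge: "w y n = Some a \<Longrightarrow> w y (Suc n) = Some b \<Longrightarrow> {a,b} \<in> (if even n then Mb else Ma)"
proof -
  assume h1: "w y n = Some a" and h2: "w y (Suc n) = Some b"
  obtain a' where "w y n = Some a'" "mate (if even n then Mb else Ma) a' = Some b"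
    using wk_Suc_Some[OF h2] by blast
  then have "mate (if even n then Mb else Ma) a = Some b" using h1 by simp
  then show ?thesis by (cases "even n") (simp_all add: mate_Some[OF mA] mate_Some[OF mB])
qed

lemma wk_edgeE: "w y n = Some a \<Longrightarrow> w y (Suc n) = Some b \<Longrightarrow> {a,b} \<in> E"
proof -
  assume h: "w y n = Some a" "w y (Suc n) = Some b"
  show ?thesis using wk_edge[OF h] MaE by (cases "even n") auto
qed

lemma wk_next: "w y n = Some a \<Longrightarrow> {a,b} \<in> (if even n then Mb else Ma) \<Longrightarrow> w y (Suc n) = Some b"
  by (cases "even n") (simp_all add: mate_Some[OF mA] mate_Some[OF mB])

lemma cutP_k: "cutP S Ma Mb k y k" unfolding cutP_def using k1 by simp

lemma c_P: "cutP S Ma Mb k y (c y)"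
  unfolding cut_def by (rule LeastI[of _ k], rule cutP_k)

lemma c_ge: "1 \<le> c y" and c_le: "c y \<le> k" using c_P unfolding cutP_def by auto

lemma c_min: "i < c y \<Longrightarrow> \<not> cutP S Ma Mb k y i"
  unfolding cut_def by (rule not_less_Least)

lemma Vm_Ma: "x \<in> Vm Ma \<longleftrightarrow> (\<exists>u. {x,u} \<in> Ma)" using Vm_iff[OF G MaE(1)] .
lemma Vm_Mb: "x \<in> Vm Mb \<longleftrightarrow> (\<exists>u. {x,u} \<in> Mb)" using Vm_iff[OF G MaE(2)] .

lemma inU: "y \<in> S \<Longrightarrow> y \<notin> Vm Ma \<Longrightarrow> j < 2 * c y \<Longrightarrow> w y j = Some a \<Longrightarrow> w y (Suc j) = Some b
   \<Longrightarrow> {a,b} \<in> U"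
  unfolding Uset_def by blast

lemma conflict:
  assumes e: "e \<in> Ma" "e \<notin> U" and f: "f \<in> Mb" "f \<in> U" and x: "x \<in> e" "x \<in> f"
  shows False
proof -
  obtain y j a b where y: "y \<in> S" "y \<notin> Vm Ma" and j: "j < 2 * c y"
    and wa: "w y j = Some a" and wb: "w y (Suc j) = Some b" and fe: "f = {a,b}"
    using f(2) unfolding Uset_def by blast
  show False
  proof (cases "even j")
    case False
    then have "f \<in> Ma" using wk_edge[OF wa wb] fe by simp
    then have "e = f" using match_uniq_edge[OF mA e(1) _ x] by simp
    then show False using e f by simp
  next
    case True
    have "x = a \<or> x = b" using x fe by auto
    then show False
    proof
      assume xb: "x = b"
      have eE: "e \<in> E" using e(1) MaE by blast
      obtain z where ez: "e = {b,z}" using graph_inc[OF G eE] x xb by blast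
      have "w y (Suc (Suc j)) = Some z" using wk_next[OF wb] ez e(1) True by simp
      moreover have "Suc j < 2 * c y" using j True by presburger
      ultimately have "e \<in> U" using inU[OF y _ wb] ez by blast
      then show False using e by simp
    next
      assume xa: "x = a"
      show False
      proof (cases j)
        case 0
        then have "a = y" using wa by simp
        then have "y \<in> Vm Ma" using e x xa unfolding Vm_def by blast
        then show False using y by simp
      next
        case (Suc j')
        obtain a' where wa': "w y j' = Some a'" using wk_prefix[OF wa, of j'] Suc by auto
        have wa2: "w y (Suc j') = Some a" using wa Suc by (simp del: wk.simps)
        have oj: "\<not> even j'" using True Suc by simp
        have "{a',a} \<in> Ma" using wk_edge[OF wa' wa2] oj by simp
        then have "e = {a',a}" using match_uniq_edge[OF mA e(1) _ x(1)] xa by blast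
        moreover have "j' < 2 * c y" using j Suc by simp
        ultimately have "e \<in> U" using inU[OF y _ wa' wa2] by simp
        then show False using e by simp
      qed
    qed
  qed
qed

lemma Mc_matching: "matching E Mc"
  unfolding matching_def
proof (intro conjI ballI impI)
  show "Mc \<subseteq> E" using MaE unfolding MC_def by auto
next
  fix e1 e2 assume e1: "e1 \<in> Mc" and e2: "e2 \<in> Mc" and ne: "e1 \<noteq> e2"
  show "e1 \<inter> e2 = {}"
  proof (rule ccontr)
    assume "e1 \<inter> e2 \<noteq> {}"
    then obtain x where x: "x \<in> e1" "x \<in> e2" by blast
    consider "e1 \<in> Ma - U" "e2 \<in> Ma - U" | "e1 \<in> Mb \<inter> U" "e2 \<in> Mb \<inter> U"
      | "e1 \<in> Ma - U" "e2 \<in> Mb \<inter> U" | "e1 \<in> Mb \<inter> U" "e2 \<in> Ma - U"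
      using e1 e2 unfolding MC_def by blast
    then show False
    proof cases
      case 1 then show ?thesis using match_uniq_edge[OF mA _ _ x] ne by blast
    next
      case 2 then show ?thesis using match_uniq_edge[OF mB _ _ x] ne by blast
    next
      case 3 then show ?thesis using conflict[of e1 e2 x] x by blast
    next
      case 4 then show ?thesis using conflict[of e2 e1 x] x by blast
    qed
  qed
qed


lemma finV: "finite V" using G unfolding graph_def by simp

lemma finE: "finite E"
proof -
  have "E \<subseteq> Pow V"
  proof
    fix e assume "e \<in> E"
    then obtain a b where "a \<in> V" "b \<in> V" "e = {a,b}" using graph_edge[OF G] by blast
    then show "e \<in> Pow V" by simp
  qed
  then show ?thesis by (rule finite_subset) (simp add: finV)
qed

lemma Vm_sub: assumes "M \<subseteq> E" shows "Vm M \<subseteq> V"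
proof
  fix x assume "x \<in> Vm M"
  then obtain e where e: "e \<in> M" "x \<in> e" unfolding Vm_def by blast
  then obtain a b where "a \<in> V" "b \<in> V" "e = {a,b}" using graph_edge[OF G] assms by blast
  then show "x \<in> V" using e by blast
qed

lemma card_Vm: assumes m: "matching E M" shows "card (Vm M) = 2 * card M"
proof -
  have ME: "M \<subseteq> E" using m unfolding matching_def by simp
  have pd: "pairwise disjnt M" using m unfolding matching_def pairwise_def disjnt_def by blast
  have c2: "\<And>e. e \<in> M \<Longrightarrow> card e = 2"
  proof -
    fix e assume "e \<in> M"
    then obtain a b where "a \<noteq> b" "e = {a,b}" using graph_edge[OF G] ME by blast
    then show "card e = 2" by simp
  qed
  have fe: "\<And>e. e \<in> M \<Longrightarrow> finite e"
  proof -
    fix e assume "e \<in> M"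
    then obtain a b where "e = {a,b}" using graph_edge[OF G] ME by blast
    then show "finite e" by simp
  qed
  have "card (Vm M) = sum card M" unfolding Vm_def by (rule card_Union_disjoint[OF pd fe])
  also have "\<dots> = sum (\<lambda>_. 2) M" using c2 by (rule sum.cong[OF refl])
  also have "\<dots> = 2 * card M" by simp
  finally show ?thesis .
qed

lemma Mc_sub: "Mc \<subseteq> E" using Mc_matching unfolding matching_def by simp

lemma Mb_U_Mc: "f \<in> Mb \<Longrightarrow> f \<in> U \<Longrightarrow> f \<in> Mc" unfolding MC_def by blast

lemma free_Mc: assumes y: "y \<in> S" "y \<notin> Vm Ma" "y \<in> Vm Mb" shows "y \<in> Vm Mc"
proof -
  obtain u where u: "{y,u} \<in> Mb" using y(3) Vm_Mb by blast
  have w0: "w y 0 = Some y" by simp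
  have w1: "w y (Suc 0) = Some u" using wk_next[OF w0] u by simp
  have "0 < 2 * c y" using c_ge[of y] by simp
  then have "{y,u} \<in> U" using inU[OF y(1,2) _ w0 w1] by simp
  then have "{y,u} \<in> Mc" using Mb_U_Mc u by blast
  then show ?thesis unfolding Vm_def by blast
qed

definition PL :: "'v \<Rightarrow> nat \<Rightarrow> 'v \<Rightarrow> bool" where
  "PL y j u = (y \<in> S \<and> y \<notin> Vm Ma \<and> odd j \<and> j < 2 * c y \<and> w y (Suc j) = Some u
      \<and> (Suc j = 2 * c y \<or> w y (Suc (Suc j)) = None))"

lemma lost_char: assumes u: "u \<in> Vm Ma" "u \<notin> Vm Mc" shows "\<exists>y j. PL y j u"
proof -
  obtain e where e: "e \<in> Ma" "u \<in> e" using u(1) unfolding Vm_def by blast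
  have "e \<notin> Mc" using u(2) e(2) unfolding Vm_def by blast
  then have eU: "e \<in> U" using e(1) unfolding MC_def by blast
  obtain y j a b where y: "y \<in> S" "y \<notin> Vm Ma" and j: "j < 2 * c y"
    and wa: "w y j = Some a" and wb: "w y (Suc j) = Some b" and fe: "e = {a,b}"
    using eU unfolding Uset_def by blast
  have oj: "odd j"
  proof
    assume "even j"
    then have "e \<in> Mb" using wk_edge[OF wa wb] fe by simp
    then have "e \<in> Mc" using Mb_U_Mc eU by blast
    then show False using \<open>e \<notin> Mc\<close> by simp
  qed
  have "u \<noteq> a"
  proof
    assume ua: "u = a"
    obtain j'' where jj: "j = Suc j''" using oj by (cases j) auto
    obtain a'' where wa'': "w y j'' = Some a''" using wk_prefix[OF wa, of j''] jj by auto
    have wa2: "w y (Suc j'') = Some a" using wa jj by (simp del: wk.simps)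
    have ej: "even j''" using oj jj by simp
    have "{a'',a} \<in> Mb" using wk_edge[OF wa'' wa2] ej by simp
    moreover have "j'' < 2 * c y" using j jj by simp
    ultimately have "{a'',a} \<in> Mc" using inU[OF y _ wa'' wa2] Mb_U_Mc by blast
    then have "u \<in> Vm Mc" using ua unfolding Vm_def by blast
    then show False using u by simp
  qed
  then have ub: "u = b" using e(2) fe by blast
  have "Suc j = 2 * c y \<or> w y (Suc (Suc j)) = None"
  proof (rule ccontr)
    assume "\<not> ?thesis"
    then obtain z where ne: "Suc j \<noteq> 2 * c y" and wz: "w y (Suc (Suc j)) = Some z" by auto
    have "{b,z} \<in> Mb" using wk_edge[OF wb wz] oj by simp
    moreover have "Suc j < 2 * c y" using j ne by simp
    ultimately have "{b,z} \<in> Mc" using inU[OF y _ wb wz] Mb_U_Mc by blast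
    then have "u \<in> Vm Mc" using ub unfolding Vm_def by blast
    then show False using u by simp
  qed
  then show ?thesis unfolding PL_def using y oj j wb ub by blast
qed

definition g :: "'v \<Rightarrow> 'v" where "g u = (SOME y. \<exists>j. PL y j u)"

lemma g_prop: "u \<in> Vm Ma \<Longrightarrow> u \<notin> Vm Mc \<Longrightarrow> \<exists>j. PL (g u) j u"
  unfolding g_def by (rule someI_ex, rule lost_char)

lemma PL_inj: assumes "PL y j u" "PL y j' u'" shows "u = u'"
proof -
  have A: "u = u'" if h: "PL y j u" "PL y j' u'" "j < j'" for j j' u u'
  proof -
    have "\<exists>z. w y (Suc (Suc j)) = Some z"
      using h(2) wk_prefix[of Ma Mb y "Suc j'" u' "Suc (Suc j)"] h(3) unfolding PL_def by auto
    then have "Suc j = 2 * c y" using h(1) unfolding PL_def by auto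
    then show ?thesis using h(2,3) unfolding PL_def by auto
  qed
  show ?thesis
  proof (cases j j' rule: linorder_cases)
    case less then show ?thesis using A assms by blast
  next
    case equal then show ?thesis using assms unfolding PL_def by auto
  next
    case greater then show ?thesis using A assms by metis
  qed
qed

lemma PL_target: assumes "PL y j u" shows "y \<in> (S \<inter> Vm Mc) - Vm Ma"
proof -
  have y: "y \<in> S" "y \<notin> Vm Ma" using assms unfolding PL_def by auto
  have ws: "w y (Suc j) = Some u" using assms unfolding PL_def by auto
  obtain p where w1: "w y (Suc 0) = Some p" using wk_prefix[OF ws, of "Suc 0"] by auto
  have "{y,p} \<in> Mb" using wk_edge[of y 0 y p] w1 by simp
  then have "y \<in> Vm Mb" using Vm_Mb by blast
  then show ?thesis using free_Mc y by blast
qed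

lemma g_inj: "inj_on g (Vm Ma - Vm Mc)"
proof (rule inj_onI)
  fix u u' assume u: "u \<in> Vm Ma - Vm Mc" and u': "u' \<in> Vm Ma - Vm Mc" and eq: "g u = g u'"
  obtain j where j: "PL (g u) j u" using g_prop u by blast
  obtain j' where j': "PL (g u') j' u'" using g_prop u' by blast
  show "u = u'" using PL_inj[OF j] j' eq by simp
qed

lemma g_target: "u \<in> Vm Ma - Vm Mc \<Longrightarrow> g u \<in> (S \<inter> Vm Mc) - Vm Ma"
  using g_prop PL_target by blast

lemma lost_le: "card (Vm Ma - Vm Mc) \<le> card ((S \<inter> Vm Mc) - Vm Ma)"
proof (rule card_inj_on_le[OF g_inj])
  show "g ` (Vm Ma - Vm Mc) \<subseteq> S \<inter> Vm Mc - Vm Ma" using g_target by blast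
  show "finite (S \<inter> Vm Mc - Vm Ma)" using finV SV by (simp add: finite_subset)
qed

lemma part2: "card (Vm Ma - (Vm Mc \<union> S)) \<le> card ((S \<inter> Vm Mc) - Vm Ma)"
proof -
  have "card (Vm Ma - (Vm Mc \<union> S)) \<le> card (Vm Ma - Vm Mc)"
    by (rule card_mono) (use finV Vm_sub[OF MaE(1)] finite_subset in auto)
  then show ?thesis using lost_le by simp
qed

lemma part1: "card Ma \<le> card Mc"
proof -
  have fa: "finite (Vm Ma)" "finite (Vm Mc)"
    using finV Vm_sub[OF MaE(1)] Vm_sub[OF Mc_sub] finite_subset by auto
  have "card (Vm Ma) = card (Vm Ma \<inter> Vm Mc) + card (Vm Ma - Vm Mc)"
    using fa card_Int_Diff by blast
  moreover have "card (Vm Mc) = card (Vm Mc \<inter> Vm Ma) + card (Vm Mc - Vm Ma)"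
    using fa card_Int_Diff by blast
  moreover have "card (S \<inter> Vm Mc - Vm Ma) \<le> card (Vm Mc - Vm Ma)"
    by (rule card_mono) (use fa in auto)
  ultimately have "card (Vm Ma) \<le> card (Vm Mc)" using lost_le by (simp add: Int_commute)
  then show ?thesis using card_Vm[OF mA] card_Vm[OF Mc_matching] by simp
qed


lemma wk_back: "w y (m + n) = Some x \<Longrightarrow> w y' (m + n') = Some x \<Longrightarrow> even n = even n'
   \<Longrightarrow> w y n = w y' n'"
proof (induction m arbitrary: x)
  case 0 then show ?case by simp
next
  case (Suc m)
  have h1: "w y (Suc (m+n)) = Some x" using Suc.prems(1) by (simp del: wk.simps)
  have h2: "w y' (Suc (m+n')) = Some x" using Suc.prems(2) by (simp del: wk.simps)
  obtain a where a: "w y (m+n) = Some a" using wk_Suc_Some[OF h1] by blast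
  obtain a' where a': "w y' (m+n') = Some a'" using wk_Suc_Some[OF h2] by blast
  have par: "even (m+n) = even (m+n')" using Suc.prems(3) by simp
  define M where "M = (if even (m+n) then Mb else Ma)"
  have mM: "matching E M" unfolding M_def using mA mB by simp
  have e1: "{a,x} \<in> M" using wk_edge[OF a h1] unfolding M_def .
  have e2: "{a',x} \<in> M" using wk_edge[OF a' h2] par unfolding M_def by simp
  have "a = a'" using match_uniq[OF mM, of x a a'] e1 e2 by (simp add: insert_commute)
  then show ?case using Suc.IH[OF a] a' Suc.prems(3) by simp
qed

lemma same_pt:
  assumes y: "y \<notin> Vm Ma" "y' \<notin> Vm Ma" and wx: "w y (2*i) = Some x" "w y' (2*i') = Some x"
    and le: "i \<le> i'"
  shows "i = i' \<and> y = y'"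
proof -
  obtain d where d: "i' = i + d" using le le_Suc_ex by blast
  have h1: "w y (2*i + 0) = Some x" using wx(1) by (simp del: wk.simps)
  have h2: "w y' (2*i + 2*d) = Some x" using wx(2) d by (simp del: wk.simps add: algebra_simps)
  have "w y 0 = w y' (2*d)" by (rule wk_back[OF h1 h2]) simp
  then have yd: "w y' (2*d) = Some y" by simp
  show ?thesis
  proof (cases d)
    case 0
    then show ?thesis using yd d by simp
  next
    case (Suc q)
    have yd2: "w y' (Suc (Suc (2*q))) = Some y" using yd Suc by (simp del: wk.simps)
    obtain p where p: "w y' (Suc (2*q)) = Some p" using wk_Suc_Some[OF yd2] by blast
    have "{p,y} \<in> Ma" using wk_edge[OF p yd2] by simp
    then have "y \<in> Vm Ma" unfolding Vm_def by blast
    then show ?thesis using y by simp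
  qed
qed

lemma missed_props:
  assumes x: "x \<in> S \<inter> Vm Mb - Vm Mc"
  shows "x \<in> Vm Ma - Vm Mc \<and> (\<exists>j. PL (g x) j x \<and> Suc j = 2*k \<and> c (g x) = k)"
proof -
  have xa: "x \<in> Vm Ma"
  proof (rule ccontr)
    assume "x \<notin> Vm Ma"
    then have "x \<in> Vm Mc" using free_Mc x by blast
    then show False using x by simp
  qed
  then have xl: "x \<in> Vm Ma - Vm Mc" using x by simp
  define y where "y = g x"
  obtain j where j: "PL y j x" using g_prop xl unfolding y_def by blast
  have wj: "w y (Suc j) = Some x" and oj: "odd j" and ys: "y \<in> S" "y \<notin> Vm Ma"
    using j unfolding PL_def by auto
  obtain z where z: "{x,z} \<in> Mb" using x Vm_Mb by blast
  have "w y (Suc (Suc j)) = Some z" using wk_next[OF wj] z oj by simp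
  then have sj: "Suc j = 2 * c y" using j unfolding PL_def by auto
  have ck: "c y = k"
  proof (rule ccontr)
    assume ne: "c y \<noteq> k"
    have "w y (2 * c y) \<notin> Some ` S" using c_P[of y] ne unfolding cutP_def by auto
    moreover have "w y (2 * c y) = Some x" using wj sj by (simp del: wk.simps)
    ultimately show False using x by auto
  qed
  show ?thesis using xl j sj ck unfolding y_def by auto
qed

lemma pts:
  assumes ys: "y \<in> S" "y \<notin> Vm Ma" and ck: "c y = k" and wx: "w y (2*k) = Some x"
    and x: "x \<in> S \<inter> Vm Mb" and i: "i \<in> {1..k}"
  shows "\<exists>z. w y (2*i) = Some z \<and> z \<in> S \<inter> Vm Mb"
proof (cases "i = k")
  case True then show ?thesis using wx x by simp
next
  case False
  then have ik: "i < k" using i by simp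
  obtain z where z: "w y (2*i) = Some z" using wk_prefix[OF wx, of "2*i"] ik by auto
  obtain z' where z': "w y (Suc (2*i)) = Some z'" using wk_prefix[OF wx, of "Suc (2*i)"] ik by auto
  have "{z,z'} \<in> Mb" using wk_edge[OF z z'] by simp
  then have zb: "z \<in> Vm Mb" using Vm_Mb by blast
  have "\<not> cutP S Ma Mb k y i" using c_min[of i y] ik ck by simp
  then have "w y (2*i) \<in> Some ` S" using i ik unfolding cutP_def by auto
  then have "z \<in> S" using z by auto
  then show ?thesis using z zb by simp
qed

definition h :: "'v \<times> nat \<Rightarrow> 'v" where "h p = the (w (g (fst p)) (2 * snd p))"

lemma missed_le: "k * card (S \<inter> Vm Mb - Vm Mc) \<le> card (S \<inter> Vm Mb)"
proof -
  let ?X = "S \<inter> Vm Mb - Vm Mc"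
  have key: "\<And>x i. x \<in> ?X \<Longrightarrow> i \<in> {1..k} \<Longrightarrow>
     w (g x) (2*i) = Some (h (x,i)) \<and> h (x,i) \<in> S \<inter> Vm Mb \<and> w (g x) (2*k) = Some x
     \<and> g x \<notin> Vm Ma"
  proof -
    fix x i assume x: "x \<in> ?X" and i: "i \<in> {1..k}"
    obtain j where j: "PL (g x) j x" "Suc j = 2*k" "c (g x) = k" using missed_props[OF x] by blast
    have ys: "g x \<in> S" "g x \<notin> Vm Ma" and wx: "w (g x) (2*k) = Some x"
      using j unfolding PL_def by (auto simp del: wk.simps)
    obtain z where z: "w (g x) (2*i) = Some z" "z \<in> S \<inter> Vm Mb"
      using pts[OF ys j(3) wx _ i] x by blast
    have "h (x,i) = z" unfolding h_def using z by simp
    then show "w (g x) (2*i) = Some (h (x,i)) \<and> h (x,i) \<in> S \<inter> Vm Mb \<and> w (g x) (2*k) = Some x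
       \<and> g x \<notin> Vm Ma" using z wx ys by simp
  qed
  have inj: "inj_on h (?X \<times> {1..k})"
  proof (rule inj_onI)
    fix p q assume p: "p \<in> ?X \<times> {1..k}" and q: "q \<in> ?X \<times> {1..k}" and eq: "h p = h q"
    obtain x i where pxi: "p = (x,i)" by (cases p)
    obtain x' i' where qxi: "q = (x',i')" by (cases q)
    have x: "x \<in> ?X" "i \<in> {1..k}" using p pxi by auto
    have x': "x' \<in> ?X" "i' \<in> {1..k}" using q qxi by auto
    have eq': "h (x,i) = h (x',i')" using eq pxi qxi by simp
    have K1: "w (g x) (2*i) = Some (h (x,i))" "g x \<notin> Vm Ma" "w (g x) (2*k) = Some x"
      using key[OF x] by auto
    have K2: "w (g x') (2*i') = Some (h (x,i))" "g x' \<notin> Vm Ma" "w (g x') (2*k) = Some x'"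
      using key[OF x'] eq' by auto
    have ii: "i = i' \<and> g x = g x'"
    proof (cases "i \<le> i'")
      case True show ?thesis by (rule same_pt[OF K1(2) K2(2) K1(1) K2(1) True])
    next
      case False
      have "i' = i \<and> g x' = g x" by (rule same_pt[OF K2(2) K1(2) K2(1) K1(1)]) (use False in simp)
      then show ?thesis by simp
    qed
    then have gg: "g x = g x'" by simp
    have "w (g x) (2*k) = Some x'" using K2(3) gg by (simp del: wk.simps)
    then have "x = x'" using K1(3) by simp
    then show "p = q" using ii pxi qxi by simp
  qed
  have img: "h ` (?X \<times> {1..k}) \<subseteq> S \<inter> Vm Mb" using key by blast
  have fin: "finite (S \<inter> Vm Mb)" using finV SV by (simp add: finite_subset)
  have "card (?X \<times> {1..k}) \<le> card (S \<inter> Vm Mb)" by (rule card_inj_on_le[OF inj img fin])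
  then show ?thesis by (simp add: card_cartesian_product mult.commute)
qed

lemma part3:
  assumes s: "s \<le> card (S \<inter> Vm Mb)"
  shows "real (card (S \<inter> Vm Mc)) \<ge> (1 - 1 / real k) * real s"
proof -
  let ?T = "S \<inter> Vm Mb"
  have finT: "finite ?T" using finV SV by (simp add: finite_subset)
  have finS: "finite (S \<inter> Vm Mc)" using finV SV by (simp add: finite_subset)
  have c1: "card ?T = card (?T \<inter> Vm Mc) + card (?T - Vm Mc)" using finT card_Int_Diff by blast
  have c2: "card (?T \<inter> Vm Mc) \<le> card (S \<inter> Vm Mc)" by (rule card_mono[OF finS]) blast
  have c3: "real k * real (card (?T - Vm Mc)) \<le> real (card ?T)"
    using missed_le by (metis of_nat_le_iff of_nat_mult)
  have kp: "real k > 0" using k1 by simp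
  have m: "real (card (?T - Vm Mc)) \<le> real (card ?T) / real k"
    using c3 kp by (simp add: pos_le_divide_eq mult.commute)
  have q: "real (card (S \<inter> Vm Mc)) \<ge> real (card ?T) - real (card (?T - Vm Mc))"
    using c1 c2 by simp
  have nn: "0 \<le> 1 - 1 / real k" using k1 by simp
  have "(1 - 1 / real k) * real s \<le> (1 - 1 / real k) * real (card ?T)"
    by (rule mult_left_mono) (use s nn in simp_all)
  also have "\<dots> = real (card ?T) - real (card ?T) / real k" by (simp add: algebra_simps)
  finally show ?thesis using m q by linarith
qed


lemma dist_back: "w y (m + d) = Some x \<Longrightarrow> w y m = Some z \<Longrightarrow> z \<in> ball E x d"
proof (induction d arbitrary: m z)
  case 0 then show ?case by simp
next
  case (Suc d)
  have h: "w y (Suc m + d) = Some x" using Suc.prems(1) by (simp del: wk.simps)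
  obtain z' where z': "w y (Suc m) = Some z'" using wk_prefix[OF h, of "Suc m"] by auto
  have zb: "z' \<in> ball E x d" by (rule Suc.IH[OF h z'])
  have "{z,z'} \<in> E" by (rule wk_edgeE[OF Suc.prems(2) z'])
  then have ze: "{z',z} \<in> E" by (simp only: insert_commute)
  show ?case by (rule ball_step[OF zb ze])
qed

lemma dist_fwd: "w y m = Some z \<Longrightarrow> w y (m + d) = Some x \<Longrightarrow> x \<in> ball E z d"
proof (induction d arbitrary: x)
  case 0 then show ?case by simp
next
  case (Suc d)
  have h: "w y (Suc (m + d)) = Some x" using Suc.prems(2) by (simp del: wk.simps)
  obtain x' where x': "w y (m + d) = Some x'" using wk_Suc_Some[OF h] by blast
  have "x' \<in> ball E z d" by (rule Suc.IH[OF Suc.prems(1) x'])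
  moreover have "{x',x} \<in> E" using wk_edgeE[OF x' h] .
  ultimately show ?case using ball_step[of x' E z d x] by simp
qed

end

lemma inst_of: "valid_inst (V,E,S,Ma,Mb) \<Longrightarrow> 1 \<le> k \<Longrightarrow> inst V E S Ma Mb k"
  unfolding valid_inst_def by unfold_locales simp_all

lemma same_view_unf: "same_view r v (V,E,S,Ma,Mb) (V',E',S',Ma',Mb') \<longleftrightarrow>
  (ball E v r = ball E' v r \<and> V \<inter> ball E v r = V' \<inter> ball E v r \<and> S \<inter> ball E v r = S' \<inter> ball E v r \<and>
   (\<forall>e. e \<subseteq> ball E v r \<longrightarrow> (e \<in> E \<longleftrightarrow> e \<in> E') \<and> (e \<in> Ma \<longleftrightarrow> e \<in> Ma') \<and> (e \<in> Mb \<longleftrightarrow> e \<in> Mb')))"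
  by (simp add: same_view_def Let_def)

lemma same_view_sym: "same_view r v (V,E,S,Ma,Mb) (V',E',S',Ma',Mb') \<Longrightarrow>
   same_view r v (V',E',S',Ma',Mb') (V,E,S,Ma,Mb)"
  unfolding same_view_unf by metis

lemma U_local:
  assumes I1: "inst V E S Ma Mb k" and I2: "inst V' E' S' Ma' Mb' k"
    and sv: "same_view (3*k) v (V,E,S,Ma,Mb) (V',E',S',Ma',Mb')"
    and eU: "e \<in> Uset S Ma Mb k" and ve: "v \<in> e"
  shows "e \<in> Uset S' Ma' Mb' k"
proof -
  interpret A: inst V E S Ma Mb k by (rule I1)
  interpret A': inst V' E' S' Ma' Mb' k by (rule I2)
  define B where "B = ball E v (3*k)"
  have bE: "ball E v (3*k) = ball E' v (3*k)" and SB: "S \<inter> B = S' \<inter> B"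
    and ed: "\<And>e. e \<subseteq> B \<Longrightarrow> (e \<in> E \<longleftrightarrow> e \<in> E') \<and> (e \<in> Ma \<longleftrightarrow> e \<in> Ma') \<and> (e \<in> Mb \<longleftrightarrow> e \<in> Mb')"
    using sv unfolding same_view_unf B_def by auto
  have edE: "\<And>e. e \<subseteq> ball E v (3*k) \<Longrightarrow> (e \<in> E \<longleftrightarrow> e \<in> E')" using ed unfolding B_def by blast
  have beq: "\<And>m. m \<le> 3*k \<Longrightarrow> ball E v m = ball E' v m" using ball_eq[OF bE edE] by blast
  have inB: "\<And>x m. x \<in> ball E v m \<Longrightarrow> m \<le> 3*k \<Longrightarrow> x \<in> B"
  proof -
    fix x m assume x: "x \<in> ball E v m" and m: "m \<le> 3*k"
    have "ball E v m \<subseteq> ball E v (3*k)" by (rule ball_mono'[OF m])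
    then show "x \<in> B" unfolding B_def using x by blast
  qed
  have pairB: "\<And>x u m. x \<in> ball E v m \<Longrightarrow> m < 3*k \<Longrightarrow> {x,u} \<in> E \<or> {x,u} \<in> E' \<Longrightarrow> {x,u} \<subseteq> B"
  proof -
    fix x u m assume x: "x \<in> ball E v m" and m: "m < 3*k" and e: "{x,u} \<in> E \<or> {x,u} \<in> E'"
    have xB: "x \<in> B" using inB[OF x] m by simp
    have "u \<in> ball E v (Suc m)"
    proof (cases "{x,u} \<in> E")
      case True show ?thesis by (rule ball_step[OF x True])
    next
      case False
      then have e': "{x,u} \<in> E'" using e by simp
      have "x \<in> ball E' v m" using x beq[of m] m by simp
      then have "u \<in> ball E' v (Suc m)" by (rule ball_step[OF _ e'])
      then show ?thesis using beq[of "Suc m"] m by simp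
    qed
    then have "u \<in> B" using inB[of u "Suc m"] m by simp
    then show "{x,u} \<subseteq> B" using xB by simp
  qed
  have nbr: "\<And>x u m. x \<in> ball E v m \<Longrightarrow> m < 3*k \<Longrightarrow>
      ({x,u} \<in> Ma \<longleftrightarrow> {x,u} \<in> Ma') \<and> ({x,u} \<in> Mb \<longleftrightarrow> {x,u} \<in> Mb')"
  proof -
    fix x u m assume x: "x \<in> ball E v m" and m: "m < 3*k"
    show "({x,u} \<in> Ma \<longleftrightarrow> {x,u} \<in> Ma') \<and> ({x,u} \<in> Mb \<longleftrightarrow> {x,u} \<in> Mb')"
    proof (cases "{x,u} \<in> E \<or> {x,u} \<in> E'")
      case True
      then show ?thesis using ed[OF pairB[OF x m True]] by blast
    next
      case False
      then show ?thesis using A.MaE A'.MaE by blast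
    qed
  qed
  have mate_eq: "\<And>x m. x \<in> ball E v m \<Longrightarrow> m < 3*k \<Longrightarrow>
      mate Ma x = mate Ma' x \<and> mate Mb x = mate Mb' x"
  proof -
    fix x m assume x: "x \<in> ball E v m" and m: "m < 3*k"
    show "mate Ma x = mate Ma' x \<and> mate Mb x = mate Mb' x"
      using mate_cong[of x Ma Ma'] mate_cong[of x Mb Mb'] nbr[OF x m] by blast
  qed
  obtain y j a b where y: "y \<in> S" "y \<notin> Vm Ma" and j: "j < 2 * cut S Ma Mb k y"
    and wa: "wk Ma Mb y j = Some a" and wb: "wk Ma Mb y (Suc j) = Some b" and ee: "e = {a,b}"
    using eU unfolding Uset_def by blast
  have j2: "Suc j \<le> 2*k" using j A.c_le[of y] by simp
  obtain j0 where j0: "j0 \<le> 2*k" "wk Ma Mb y j0 = Some v"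
  proof -
    have "v = a \<or> v = b" using ve ee by blast
    then show ?thesis
    proof
      assume "v = a" then show ?thesis using that[of j] wa j2 by simp
    next
      assume "v = b" then show ?thesis using that[of "Suc j"] wb j2 by simp
    qed
  qed
  have near: "\<And>t x. t \<le> 2*k \<Longrightarrow> wk Ma Mb y t = Some x \<Longrightarrow> x \<in> ball E v (2*k)"
  proof -
    fix t x assume t: "t \<le> 2*k" and wx: "wk Ma Mb y t = Some x"
    show "x \<in> ball E v (2*k)"
    proof (cases "t \<le> j0")
      case True
      have "wk Ma Mb y (t + (j0 - t)) = Some v" using j0 True by (simp del: wk.simps)
      then have "x \<in> ball E v (j0 - t)" by (rule A.dist_back[OF _ wx])
      moreover have "j0 - t \<le> 2*k" using j0 by simp
      ultimately show ?thesis using ball_mono'[of "j0 - t" "2*k" E v] by blast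
    next
      case False
      have "wk Ma Mb y (j0 + (t - j0)) = Some x" using wx False by (simp del: wk.simps)
      then have "x \<in> ball E v (t - j0)" by (rule A.dist_fwd[OF j0(2)])
      moreover have "t - j0 \<le> 2*k" using t by simp
      ultimately show ?thesis using ball_mono'[of "t - j0" "2*k" E v] by blast
    qed
  qed
  have k3: "2*k < 3*k" using A.k1 by simp
  have weq: "\<And>t. t \<le> 2*k \<Longrightarrow> wk Ma' Mb' y t = wk Ma Mb y t"
  proof -
    fix t show "t \<le> 2*k \<Longrightarrow> wk Ma' Mb' y t = wk Ma Mb y t"
    proof (induction t)
      case 0 then show ?case by simp
    next
      case (Suc t)
      then have IH: "wk Ma' Mb' y t = wk Ma Mb y t" by simp
      show ?case
      proof (cases "wk Ma Mb y t")
        case None then show ?thesis using IH by simp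
      next
        case (Some x)
        have "x \<in> ball E v (2*k)" using near[of t x] Suc.prems Some by simp
        then have me: "mate Ma x = mate Ma' x \<and> mate Mb x = mate Mb' x" by (rule mate_eq[OF _ k3])
        show ?thesis using IH Some me by simp
      qed
    qed
  qed
  have yB: "y \<in> B" using near[of 0 y] inB[of y "2*k"] by simp
  have y'S: "y \<in> S'" using SB yB y(1) by blast
  have y'M: "y \<notin> Vm Ma'"
  proof
    assume "y \<in> Vm Ma'"
    then obtain u where u: "{y,u} \<in> Ma'" using A'.Vm_Ma by blast
    have yb: "y \<in> ball E v (2*k)" using near[of 0 y] by simp
    have "{y,u} \<in> Ma" using nbr[OF yb k3, of u] u by blast
    then have "y \<in> Vm Ma" using A.Vm_Ma by blast
    then show False using y by simp
  qed
  have cP: "cutP S' Ma' Mb' k y = cutP S Ma Mb k y"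
  proof
    fix i
    show "cutP S' Ma' Mb' k y i = cutP S Ma Mb k y i"
    proof (cases "i \<le> k")
      case False then show ?thesis unfolding cutP_def by simp
    next
      case True
      then have we: "wk Ma' Mb' y (2*i) = wk Ma Mb y (2*i)" using weq by simp
      have "wk Ma Mb y (2*i) \<in> Some ` S' \<longleftrightarrow> wk Ma Mb y (2*i) \<in> Some ` S"
      proof (cases "wk Ma Mb y (2*i)")
        case None then show ?thesis by auto
      next
        case (Some x)
        have "x \<in> B" using near[of "2*i" x] Some True inB[of x "2*k"] by simp
        then have "x \<in> S' \<longleftrightarrow> x \<in> S" using SB by blast
        then show ?thesis using Some by auto
      qed
      then show ?thesis unfolding cutP_def using we by simp
    qed
  qed
  have ceq: "cut S' Ma' Mb' k y = cut S Ma Mb k y" unfolding cut_def cP ..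
  have "wk Ma' Mb' y j = Some a" using weq[of j] wa j2 by simp
  moreover have "wk Ma' Mb' y (Suc j) = Some b" using weq[of "Suc j"] wb j2 by simp
  moreover have "j < 2 * cut S' Ma' Mb' k y" using j ceq by simp
  ultimately show ?thesis unfolding Uset_def using y'S y'M ee by blast
qed

lemma MC_local:
  assumes I1: "inst V E S Ma Mb k" and I2: "inst V' E' S' Ma' Mb' k"
    and sv: "same_view (3*k) v (V,E,S,Ma,Mb) (V',E',S',Ma',Mb')"
    and eM: "e \<in> MC S Ma Mb k" and ve: "v \<in> e"
  shows "e \<in> MC S' Ma' Mb' k"
proof -
  interpret A: inst V E S Ma Mb k by (rule I1)
  have ed: "\<And>e. e \<subseteq> ball E v (3*k) \<Longrightarrow> (e \<in> Ma \<longleftrightarrow> e \<in> Ma') \<and> (e \<in> Mb \<longleftrightarrow> e \<in> Mb')"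
    using sv unfolding same_view_unf by blast
  have eE: "e \<in> E" using eM A.MaE unfolding MC_def by blast
  obtain u where eu: "e = {v,u}" using graph_inc[OF A.G eE ve] by blast
  have "u \<in> ball E v (Suc 0)" using eE eu by auto
  then have "u \<in> ball E v (3*k)" using ball_mono'[of "Suc 0" "3*k" E v] A.k1 by auto
  moreover have "v \<in> ball E v (3*k)" using ball_mono'[of 0 "3*k" E v] by auto
  ultimately have "e \<subseteq> ball E v (3*k)" using eu by simp
  then have m: "(e \<in> Ma \<longleftrightarrow> e \<in> Ma') \<and> (e \<in> Mb \<longleftrightarrow> e \<in> Mb')" using ed by blast
  have u1: "e \<in> Uset S Ma Mb k \<Longrightarrow> e \<in> Uset S' Ma' Mb' k" using U_local[OF I1 I2 sv _ ve] .
  have u2: "e \<in> Uset S' Ma' Mb' k \<Longrightarrow> e \<in> Uset S Ma Mb k"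
    using U_local[OF I2 I1 same_view_sym[OF sv] _ ve] .
  show ?thesis using eM m u1 u2 unfolding MC_def by blast
qed


theorem lemma2p7:
  "\<exists>(c::nat) (A :: nat \<Rightarrow> 'v inst \<Rightarrow> 'v set set).
     (\<forall>k\<ge>1. local_alg (c * k) (A k)) \<and>
     (\<forall>V E S Ma Mb (s::nat) (k::nat).
        valid_inst (V, E, S, Ma, Mb) \<and> s \<le> card S \<and> s \<le> card (S \<inter> Vm Mb) \<and> k \<ge> 1 \<longrightarrow>
        (let Mc = A k (V, E, S, Ma, Mb) in
           matching E Mc \<and>
           card Mc \<ge> card Ma \<and>
           card (Vm Ma - (Vm Mc \<union> S)) \<le> card ((S \<inter> Vm Mc) - Vm Ma) \<and>
           real (card (S \<inter> Vm Mc)) \<ge> (1 - 1 / real k) * real s))"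
proof -
  let ?A = "\<lambda>(k::nat) (I::'v inst). case I of (V, E, S, Ma, Mb) \<Rightarrow> MC S Ma Mb k"
  have P1: "\<forall>k\<ge>1. local_alg (3 * k) (?A k)"
  proof (intro allI impI)
    fix k :: nat assume k: "1 \<le> k"
    show "local_alg (3 * k) (?A k)"
      unfolding local_alg_def
    proof (intro allI impI)
      fix I I' :: "'v inst" and v :: 'v
      assume h: "valid_inst I \<and> valid_inst I' \<and> same_view (3 * k) v I I'"
      obtain V E S Ma Mb where I: "I = (V,E,S,Ma,Mb)" by (cases I) auto
      obtain V' E' S' Ma' Mb' where I': "I' = (V',E',S',Ma',Mb')" by (cases I') auto
      have i1: "inst V E S Ma Mb k" using h I k by (intro inst_of) simp_all
      have i2: "inst V' E' S' Ma' Mb' k" using h I' k by (intro inst_of) simp_all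
      have sv: "same_view (3*k) v (V,E,S,Ma,Mb) (V',E',S',Ma',Mb')" using h I I' by simp
      have "{e \<in> MC S Ma Mb k. v \<in> e} = {e \<in> MC S' Ma' Mb' k. v \<in> e}"
        using MC_local[OF i1 i2 sv] MC_local[OF i2 i1 same_view_sym[OF sv]] by blast
      then show "{e \<in> ?A k I. v \<in> e} = {e \<in> ?A k I'. v \<in> e}" using I I' by simp
    qed
  qed
  have P2: "\<forall>(V::'v set) E S Ma Mb (s::nat) (k::nat).
        valid_inst (V, E, S, Ma, Mb) \<and> s \<le> card S \<and> s \<le> card (S \<inter> Vm Mb) \<and> k \<ge> 1 \<longrightarrow>
        (let Mc = ?A k (V, E, S, Ma, Mb) in
           matching E Mc \<and>
           card Mc \<ge> card Ma \<and>
           card (Vm Ma - (Vm Mc \<union> S)) \<le> card ((S \<inter> Vm Mc) - Vm Ma) \<and>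
           real (card (S \<inter> Vm Mc)) \<ge> (1 - 1 / real k) * real s)"
  proof (intro allI impI)
  fix V :: "'v set" and E S Ma Mb s k
  assume h: "valid_inst (V, E, S, Ma, Mb) \<and> s \<le> card S \<and> s \<le> card (S \<inter> Vm Mb) \<and> (k::nat) \<ge> 1"
  interpret A: inst V E S Ma Mb k using inst_of h by blast
  show "let Mc = ?A k (V, E, S, Ma, Mb) in
           matching E Mc \<and>
           card Mc \<ge> card Ma \<and>
           card (Vm Ma - (Vm Mc \<union> S)) \<le> card ((S \<inter> Vm Mc) - Vm Ma) \<and>
           real (card (S \<inter> Vm Mc)) \<ge> (1 - 1 / real k) * real s"
    unfolding Let_def using A.Mc_matching A.part1 A.part2 A.part3 h by simp
  qed
  show ?thesis by (rule exI[of _ 3], rule exI[of _ ?A], rule conjI[OF P1 P2])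
qed

end
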